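(* Let $A$ be a Poisson algebra over a field $k$ of characteristic zero which is generated as a $k$-algebra by a Poisson subalgebra $B$ together with a single element $x$. Assume that $A$ supports a rational Poisson action of a torus $H=(k^\times)^r$ such that $B$ is $H$-stable and $x$ is an $H$-eigenvector. Assume moreover that there is $\eta_0\in\mathfrak h=\operatorname{Lie}H$ such that $\{x,b\}-(\eta_0.b)x\in B$ for all $b\in B$, and such that the $\eta_0$-eigenvalue of $x$ is nonzero. Then $A$ has at most twice as many $H$-stable Poisson prime ideals as $B$.
   Context: A rational Poisson action of $H=(k^\times)^r$ on $A$ is an action by Poisson automorphisms such that $A$ is the direct sum of its $H$-eigenspaces $A_x$, $x\in X(H)\cong\mathbb Z^r$ (with $(m_i)$ corresponding to the character $h\mapsto\prod h_i^{m_i}$). $\mathfrak h=\operatorname{Lie}H=k^r$ acts on $A$ by $\eta.a=(\eta|x)a$ for $a\in A_x$ (dot product); $(\eta|x)$ is called the $\eta$-eigenvalue of $a$. A Poisson prime ideal is a prime ideal $P$ with $\{A,P\}\subseteq P$. *)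

theory Defs
  imports Main
begin

definition k_algebra :: "('k::field \<Rightarrow> 'a::comm_ring_1 \<Rightarrow> 'a) \<Rightarrow> bool" where
  "k_algebra scale \<longleftrightarrow>
     (\<forall>c a b. scale c (a + b) = scale c a + scale c b)
   \<and> (\<forall>c d a. scale (c + d) a = scale c a + scale d a)
   \<and> (\<forall>c d a. scale c (scale d a) = scale (c * d) a)
   \<and> (\<forall>a. scale 1 a = a)
   \<and> (\<forall>c a b. scale c (a * b) = scale c a * b)"

definition poisson_algebra ::
  "('k::field \<Rightarrow> 'a::comm_ring_1 \<Rightarrow> 'a) \<Rightarrow> ('a \<Rightarrow> 'a \<Rightarrow> 'a) \<Rightarrow> bool" where
  "poisson_algebra scale br \<longleftrightarrow> k_algebra scale
     \<and> (\<forall>a b c. br (a + b) c = br a c + br b c)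
     \<and> (\<forall>a b c. br a (b + c) = br a b + br a c)
     \<and> (\<forall>s a b. br (scale s a) b = scale s (br a b))
     \<and> (\<forall>s a b. br a (scale s b) = scale s (br a b))
     \<and> (\<forall>a. br a a = 0)
     \<and> (\<forall>a b c. br a (br b c) + br b (br c a) + br c (br a b) = 0)
     \<and> (\<forall>a b c. br a (b * c) = br a b * c + b * br a c)"

definition k_subalgebra :: "('k::field \<Rightarrow> 'a::comm_ring_1 \<Rightarrow> 'a) \<Rightarrow> 'a set \<Rightarrow> bool" where
  "k_subalgebra scale S \<longleftrightarrow> 1 \<in> S \<and> 0 \<in> S
     \<and> (\<forall>a\<in>S. \<forall>b\<in>S. a + b \<in> S \<and> a * b \<in> S)
     \<and> (\<forall>a\<in>S. - a \<in> S)
     \<and> (\<forall>c. \<forall>a\<in>S. scale c a \<in> S)"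

definition poisson_subalgebra ::
  "('k::field \<Rightarrow> 'a::comm_ring_1 \<Rightarrow> 'a) \<Rightarrow> ('a \<Rightarrow> 'a \<Rightarrow> 'a) \<Rightarrow> 'a set \<Rightarrow> bool" where
  "poisson_subalgebra scale br S \<longleftrightarrow> k_subalgebra scale S
     \<and> (\<forall>a\<in>S. \<forall>b\<in>S. br a b \<in> S)"

definition generated_subalgebra ::
  "('k::field \<Rightarrow> 'a::comm_ring_1 \<Rightarrow> 'a) \<Rightarrow> 'a set \<Rightarrow> 'a set" where
  "generated_subalgebra scale G = \<Inter> {S. k_subalgebra scale S \<and> G \<subseteq> S}"

text \<open>Poisson prime ideals of a subalgebra S (S = UNIV for the whole algebra).\<close>

definition ideal_in :: "'a::comm_ring_1 set \<Rightarrow> 'a set \<Rightarrow> bool" where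
  "ideal_in S P \<longleftrightarrow> P \<subseteq> S \<and> 0 \<in> P \<and> (\<forall>a\<in>P. \<forall>b\<in>P. a + b \<in> P)
     \<and> (\<forall>s\<in>S. \<forall>p\<in>P. s * p \<in> P)"

definition prime_ideal_in :: "'a::comm_ring_1 set \<Rightarrow> 'a set \<Rightarrow> bool" where
  "prime_ideal_in S P \<longleftrightarrow> ideal_in S P \<and> P \<noteq> S
     \<and> (\<forall>a\<in>S. \<forall>b\<in>S. a * b \<in> P \<longrightarrow> a \<in> P \<or> b \<in> P)"

definition poisson_prime_in :: "('a::comm_ring_1 \<Rightarrow> 'a \<Rightarrow> 'a) \<Rightarrow> 'a set \<Rightarrow> 'a set \<Rightarrow> bool" where
  "poisson_prime_in br S P \<longleftrightarrow> prime_ideal_in S P \<and> (\<forall>s\<in>S. \<forall>p\<in>P. br s p \<in> P)"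

text \<open>The torus H = (k^x)^r, elements represented as h :: nat => 'k with h i \<noteq> 0 for i < r
  and h i = 1 for i \<ge> r.\<close>

definition torus :: "nat \<Rightarrow> (nat \<Rightarrow> 'k::field) set" where
  "torus r = {h. (\<forall>i<r. h i \<noteq> 0) \<and> (\<forall>i. r \<le> i \<longrightarrow> h i = 1)}"

definition char_lattice :: "nat \<Rightarrow> (nat \<Rightarrow> int) set" where
  "char_lattice r = {m. \<forall>i. r \<le> i \<longrightarrow> m i = 0}"

definition character :: "nat \<Rightarrow> (nat \<Rightarrow> int) \<Rightarrow> (nat \<Rightarrow> 'k::field) \<Rightarrow> 'k" where
  "character r m h = (\<Prod>i<r. h i powi m i)"

definition poisson_torus_action ::
  "('k::field \<Rightarrow> 'a::comm_ring_1 \<Rightarrow> 'a) \<Rightarrow> ('a \<Rightarrow> 'a \<Rightarrow> 'a) \<Rightarrow> nat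
     \<Rightarrow> ((nat \<Rightarrow> 'k) \<Rightarrow> 'a \<Rightarrow> 'a) \<Rightarrow> bool" where
  "poisson_torus_action scale br r act \<longleftrightarrow>
     (\<forall>a. act (\<lambda>_. 1) a = a)
   \<and> (\<forall>g\<in>torus r. \<forall>h\<in>torus r. \<forall>a. act (\<lambda>i. g i * h i) a = act g (act h a))
   \<and> (\<forall>h\<in>torus r. bij (act h)
        \<and> act h 1 = 1
        \<and> (\<forall>a b. act h (a + b) = act h a + act h b)
        \<and> (\<forall>a b. act h (a * b) = act h a * act h b)
        \<and> (\<forall>c a. act h (scale c a) = scale c (act h a))
        \<and> (\<forall>a b. act h (br a b) = br (act h a) (act h b)))"

definition eigenspace ::
  "('k::field \<Rightarrow> 'a::comm_ring_1 \<Rightarrow> 'a) \<Rightarrow> nat \<Rightarrow> ((nat \<Rightarrow> 'k) \<Rightarrow> 'a \<Rightarrow> 'a)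
     \<Rightarrow> (nat \<Rightarrow> int) \<Rightarrow> 'a set" where
  "eigenspace scale r act m = {a. \<forall>h\<in>torus r. act h a = scale (character r m h) a}"

definition weight_decomp ::
  "('k::field \<Rightarrow> 'a::comm_ring_1 \<Rightarrow> 'a) \<Rightarrow> nat \<Rightarrow> ((nat \<Rightarrow> 'k) \<Rightarrow> 'a \<Rightarrow> 'a)
     \<Rightarrow> 'a \<Rightarrow> ((nat \<Rightarrow> int) \<Rightarrow> 'a) \<Rightarrow> bool" where
  "weight_decomp scale r act a f \<longleftrightarrow>
     (\<forall>m. m \<notin> char_lattice r \<longrightarrow> f m = 0)
   \<and> finite {m. f m \<noteq> 0}
   \<and> (\<forall>m. f m \<in> eigenspace scale r act m)
   \<and> a = sum f {m. f m \<noteq> 0}"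

text \<open>Rational Poisson action: action by Poisson automorphisms such that A is the direct sum
  of its H-eigenspaces (every element has a unique eigen-decomposition).\<close>

definition rational_poisson_action ::
  "('k::field \<Rightarrow> 'a::comm_ring_1 \<Rightarrow> 'a) \<Rightarrow> ('a \<Rightarrow> 'a \<Rightarrow> 'a) \<Rightarrow> nat
     \<Rightarrow> ((nat \<Rightarrow> 'k) \<Rightarrow> 'a \<Rightarrow> 'a) \<Rightarrow> bool" where
  "rational_poisson_action scale br r act \<longleftrightarrow>
     poisson_torus_action scale br r act
   \<and> (\<forall>a. \<exists>!f. weight_decomp scale r act a f)"

text \<open>Pairing (eta | m) of h = k^r with X(H) = Z^r, and the induced action of h on A:
  eta.a = (eta|m) a for a \<in> A_m, extended linearly.\<close>

definition pairing :: "nat \<Rightarrow> (nat \<Rightarrow> 'k::field) \<Rightarrow> (nat \<Rightarrow> int) \<Rightarrow> 'k" where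
  "pairing r eta m = (\<Sum>i<r. eta i * of_int (m i))"

definition lie_act ::
  "('k::field \<Rightarrow> 'a::comm_ring_1 \<Rightarrow> 'a) \<Rightarrow> nat \<Rightarrow> ((nat \<Rightarrow> 'k) \<Rightarrow> 'a \<Rightarrow> 'a)
     \<Rightarrow> (nat \<Rightarrow> 'k) \<Rightarrow> 'a \<Rightarrow> 'a" where
  "lie_act scale r act eta a =
     (let f = (THE f. weight_decomp scale r act a f)
      in \<Sum>m\<in>{m. f m \<noteq> 0}. scale (pairing r eta m) (f m))"

definition H_stable :: "nat \<Rightarrow> ((nat \<Rightarrow> 'k::field) \<Rightarrow> 'a \<Rightarrow> 'a) \<Rightarrow> 'a set \<Rightarrow> bool" where
  "H_stable r act P \<longleftrightarrow> (\<forall>h\<in>torus r. act h ` P \<subseteq> P)"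

definition H_poisson_primes ::
  "nat \<Rightarrow> ((nat \<Rightarrow> 'k::field) \<Rightarrow> 'a::comm_ring_1 \<Rightarrow> 'a) \<Rightarrow> ('a \<Rightarrow> 'a \<Rightarrow> 'a)
     \<Rightarrow> 'a set \<Rightarrow> 'a set set" where
  "H_poisson_primes r act br S = {P. poisson_prime_in br S P \<and> H_stable r act P}"

end

theory Submission
  imports Defs "HOL-Library.Function_Algebras" "HOL-Computational_Algebra.Polynomial"
begin

lemma of_rat_powi: "(of_rat (q powi n) :: 'k::field_char_0) = of_rat q powi n"
  by (simp add: power_int_def of_rat_power of_rat_inverse)

lemma two_powi_inj:
  assumes "(2::'k::field_char_0) powi a = 2 powi b" shows "a = b"
proof -
  have "(of_rat (2 powi a) :: 'k) = of_rat (2 powi b)"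
    using assms by (simp add: of_rat_powi)
  hence e: "(2::rat) powi a = 2 powi b" by simp
  show ?thesis
  proof (rule ccontr)
    assume "a \<noteq> b"
    then consider "a < b" | "b < a" by linarith
    thus False using e power_int_strict_increasing[of _ _ "2::rat"] by (metis less_irrefl one_less_numeral_iff semiring_norm(76))
  qed
qed

locale pset =
  fixes scale :: "'k::field_char_0 \<Rightarrow> 'a::comm_ring_1 \<Rightarrow> 'a"
    and br :: "'a \<Rightarrow> 'a \<Rightarrow> 'a"
    and B :: "'a set" and x :: 'a
    and r :: nat and act :: "(nat \<Rightarrow> 'k) \<Rightarrow> 'a \<Rightarrow> 'a"
    and m0 :: "nat \<Rightarrow> int" and eta0 :: "nat \<Rightarrow> 'k"
  assumes PA: "poisson_algebra scale br"
    and PS: "poisson_subalgebra scale br B"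
    and GEN: "generated_subalgebra scale (insert x B) = UNIV"
    and RA: "rational_poisson_action scale br r act"
    and HB: "H_stable r act B"
    and m0L: "m0 \<in> char_lattice r" and xE: "x \<in> eigenspace scale r act m0"
    and DEL: "\<forall>b\<in>B. br x b - lie_act scale r act eta0 b * x \<in> B"
    and lam: "pairing r eta0 m0 \<noteq> 0"
begin

lemma scale_add_r: "scale c (a + b) = scale c a + scale c b"
  and scale_add_l: "scale (c + d) a = scale c a + scale d a"
  and scale_scale: "scale c (scale d a) = scale (c * d) a"
  and scale_one: "scale 1 a = a"
  and scale_mult: "scale c (a * b) = scale c a * b"
  using PA unfolding poisson_algebra_def k_algebra_def by auto

lemma br_add_l: "br (a + b) c = br a c + br b c"
  and br_add_r: "br a (b + c) = br a b + br a c"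
  and br_scale_l: "br (scale s a) b = scale s (br a b)"
  and br_scale_r: "br a (scale s b) = scale s (br a b)"
  and br_self: "br a a = 0"
  and jacobi: "br a (br b c) + br b (br c a) + br c (br a b) = 0"
  and br_leib: "br a (b * c) = br a b * c + b * br a c"
  using PA unfolding poisson_algebra_def by auto

lemma scale_zero_l[simp]: "scale 0 a = 0"
  using scale_add_l[of 0 0 a] by simp

lemma scale_zero_r[simp]: "scale c 0 = 0"
  using scale_add_r[of c 0 0] by simp

lemma scale_eq: "scale c a = scale c 1 * a"
  using scale_mult[of c 1 a] by simp

lemma scale_minus_l: "scale (- c) a = - scale c a"
  using scale_add_l[of c "-c" a] by (simp add: eq_neg_iff_add_eq_0 add.commute)

lemma scale_of_nat: "scale (of_nat n) a = of_nat n * a"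
  by (induction n) (simp_all add: scale_add_l scale_one distrib_right)

lemma scale_inv: "c \<noteq> 0 \<Longrightarrow> scale (inverse c) (scale c a) = a"
  by (simp add: scale_scale scale_one)

lemma scale_mult2: "scale c a * scale d b = scale (c * d) (a * b)"
  by (metis scale_eq scale_scale mult.assoc mult.commute)

lemma br_anti: "br a b = - br b a"
proof -
  have "0 = br (a + b) (a + b)" by (rule br_self[symmetric])
  also have "\<dots> = br a a + br a b + (br b a + br b b)" by (simp add: br_add_l br_add_r)
  finally have "br a b + br b a = 0" by (simp add: br_self)
  thus ?thesis by (simp add: eq_neg_iff_add_eq_0)
qed

lemma br_zero_l[simp]: "br 0 a = 0" using br_add_l[of 0 0 a] by simp
lemma br_zero_r[simp]: "br a 0 = 0" using br_add_r[of a 0 0] by simp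
lemma br_minus_r: "br a (- b) = - br a b"
  using br_add_r[of a b "-b"] by (simp add: eq_neg_iff_add_eq_0 add.commute)
lemma br_minus_l: "br (- a) b = - br a b"
  using br_add_l[of a "-a" b] by (simp add: eq_neg_iff_add_eq_0 add.commute)
lemma br_diff_r: "br a (b - c) = br a b - br a c"
  using br_add_r[of a b "-c"] br_minus_r by simp
lemma br_diff_l: "br (a - b) c = br a c - br b c"
  using br_add_l[of a "-b" c] br_minus_l by simp
lemma br_leib_l: "br (a * b) c = a * br b c + br a c * b"
proof -
  have "br (a*b) c = - (br c a * b + a * br c b)" by (metis br_anti br_leib)
  also have "\<dots> = a * br b c + br a c * b" by (simp add: br_anti[of c a] br_anti[of c b] algebra_simps)
  finally show ?thesis .
qed
lemma br_one_r[simp]: "br a 1 = 0"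
  using br_leib[of a 1 1] by simp
lemma br_one_l[simp]: "br 1 a = 0"
  using br_anti[of 1 a] by simp

end

context pset begin

abbreviation "eig m \<equiv> eigenspace scale r act m"
abbreviation "L \<equiv> char_lattice r"
abbreviation "eps a \<equiv> lie_act scale r act eta0 a"
abbreviation "pr m \<equiv> pairing r eta0 m"
abbreviation "wd a f \<equiv> weight_decomp scale r act a f"
abbreviation "sc c \<equiv> scale c (1::'a)"

lemma PTA: "poisson_torus_action scale br r act"
  using RA unfolding rational_poisson_action_def by auto

lemma act_add: "h \<in> torus r \<Longrightarrow> act h (a + b) = act h a + act h b"
  and act_mult: "h \<in> torus r \<Longrightarrow> act h (a * b) = act h a * act h b"
  and act_scale: "h \<in> torus r \<Longrightarrow> act h (scale c a) = scale c (act h a)"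
  and act_br: "h \<in> torus r \<Longrightarrow> act h (br a b) = br (act h a) (act h b)"
  and act_one: "h \<in> torus r \<Longrightarrow> act h 1 = 1"
  using PTA unfolding poisson_torus_action_def by auto

lemma act_zero: "h \<in> torus r \<Longrightarrow> act h 0 = 0"
  using act_add[of h 0 0] by simp

lemma act_sum: "h \<in> torus r \<Longrightarrow> act h (sum f S) = (\<Sum>i\<in>S. act h (f i))"
  by (induction S rule: infinite_finite_induct) (simp_all add: act_zero act_add)

lemma scale_sum_r: "scale c (sum f S) = (\<Sum>i\<in>S. scale c (f i))"
  by (induction S rule: infinite_finite_induct) (simp_all add: scale_add_r)

lemma scale_sum_l: "scale (sum f S) a = (\<Sum>i\<in>S. scale (f i) a)"
  by (induction S rule: infinite_finite_induct) (simp_all add: scale_add_l)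

lemma char_add: "h \<in> torus r \<Longrightarrow> character r (m + m') h = character r m h * character r m' h"
  unfolding character_def torus_def
  by (simp add: power_int_add prod.distrib)

lemma char_zero: "character r 0 h = 1"
  unfolding character_def by simp

lemma eig_0: "0 \<in> eig m"
  unfolding eigenspace_def by (auto simp: act_zero)

lemma eig_add: "a \<in> eig m \<Longrightarrow> b \<in> eig m \<Longrightarrow> a + b \<in> eig m"
  unfolding eigenspace_def by (auto simp: act_add scale_add_r)

lemma eig_scale: "a \<in> eig m \<Longrightarrow> scale c a \<in> eig m"
  unfolding eigenspace_def by (auto simp: act_scale scale_scale mult.commute)

lemma neg_scale: "- a = scale (-1) a"
  by (simp add: scale_minus_l scale_one)

lemma eig_minus: "a \<in> eig m \<Longrightarrow> - a \<in> eig m"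
  by (subst neg_scale) (rule eig_scale)

lemma eig_diff: "a \<in> eig m \<Longrightarrow> b \<in> eig m \<Longrightarrow> a - b \<in> eig m"
  using eig_add[of a m "-b"] eig_minus by simp

lemma eig_mult: "a \<in> eig m \<Longrightarrow> b \<in> eig m' \<Longrightarrow> a * b \<in> eig (m + m')"
  unfolding eigenspace_def by (auto simp: act_mult char_add scale_mult2)

lemma eig_br: "a \<in> eig m \<Longrightarrow> b \<in> eig m' \<Longrightarrow> br a b \<in> eig (m + m')"
  unfolding eigenspace_def by (auto simp: act_br char_add br_scale_l br_scale_r scale_scale mult.commute)

lemma eig_one: "1 \<in> eig 0"
  unfolding eigenspace_def by (auto simp: act_one char_zero scale_one)

lemma eig_pow: "a \<in> eig m \<Longrightarrow> a ^ i \<in> eig (of_nat i * m)"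
proof (induction i)
  case 0 thus ?case by (metis eig_one mult_zero_left of_nat_0 power_0)
next
  case (Suc i)
  have "a * a ^ i \<in> eig (m + of_nat i * m)" using eig_mult Suc by blast
  moreover have "of_nat (Suc i) * m = m + of_nat i * m"
    by (metis of_nat_Suc distrib_right mult_1 add.commute)
  ultimately show ?case by (metis power_Suc)
qed

lemma eig_of_nat: "a \<in> eig m \<Longrightarrow> of_nat n * a \<in> eig m"
  using eig_scale[of a m "of_nat n"] by (simp add: scale_of_nat)

lemma eig_sum: "(\<And>i. i \<in> S \<Longrightarrow> f i \<in> eig m) \<Longrightarrow> sum f S \<in> eig m"
  by (induction S rule: infinite_finite_induct) (auto simp: eig_0 eig_add)

lemma eig_cong: "a \<in> eig m \<Longrightarrow> m = m' \<Longrightarrow> a \<in> eig m'" by simp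

lemma pr_add: "pr (m + m') = pr m + pr m'"
  unfolding pairing_def by (simp add: sum.distrib distrib_left)

lemma pr_diff: "pr (m - m') = pr m - pr m'"
  unfolding pairing_def by (simp add: sum_subtractf right_diff_distrib)

lemma pr_nat: "pr (of_nat i * m) = of_nat i * pr m"
  unfolding pairing_def by (simp add: sum_distrib_left algebra_simps)

lemma pr_zero: "pr 0 = 0"
  unfolding pairing_def by simp

lemma L_add: "m \<in> L \<Longrightarrow> m' \<in> L \<Longrightarrow> m + m' \<in> L"
  and L_diff: "m \<in> L \<Longrightarrow> m' \<in> L \<Longrightarrow> m - m' \<in> L"
  and L_nat: "m \<in> L \<Longrightarrow> of_nat i * m \<in> L"
  and L_zero: "0 \<in> L"
  unfolding char_lattice_def by auto

lemma uniq_wd: "\<exists>!f. wd a f"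
  using RA unfolding rational_poisson_action_def by auto

lemma wd_intro:
  assumes "\<And>m. m \<notin> L \<Longrightarrow> f m = 0" "finite U" "{m. f m \<noteq> 0} \<subseteq> U"
    "\<And>m. f m \<in> eig m" "a = sum f U"
  shows "wd a f"
proof -
  have "sum f U = sum f {m. f m \<noteq> 0}"
    by (rule sum.mono_neutral_right) (use assms in auto)
  thus ?thesis unfolding weight_decomp_def using assms finite_subset by auto
qed

lemma wd_props:
  assumes "wd a f"
  shows "\<And>m. m \<notin> L \<Longrightarrow> f m = 0" "finite {m. f m \<noteq> 0}" "\<And>m. f m \<in> eig m"
    "a = sum f {m. f m \<noteq> 0}"
  using assms unfolding weight_decomp_def by auto

lemma wd_sum_super:
  assumes "wd a f" "finite U" "{m. f m \<noteq> 0} \<subseteq> U"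
  shows "a = sum f U"
proof -
  have "sum f U = sum f {m. f m \<noteq> 0}"
    by (rule sum.mono_neutral_right) (use assms in auto)
  thus ?thesis using wd_props(4)[OF assms(1)] by simp
qed

definition comp :: "(nat \<Rightarrow> int) \<Rightarrow> 'a \<Rightarrow> 'a" where
  "comp W a = (THE f. wd a f) W"

lemma the_wd: "wd a (THE f. wd a f)"
  using uniq_wd theI' by metis

lemma the_wd_eq: "wd a f \<Longrightarrow> (THE f. wd a f) = f"
  using uniq_wd the1_equality by metis

lemma comp_wd: "wd a f \<Longrightarrow> comp W a = f W"
  unfolding comp_def using the_wd_eq by simp

lemma wd_single:
  assumes "a \<in> eig W" "W \<in> L"
  shows "wd a (\<lambda>m. if m = W then a else 0)"
  by (rule wd_intro[where U="{W}"]) (use assms eig_0 in auto)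

lemma comp_eig:
  assumes "a \<in> eig W'" "W' \<in> L"
  shows "comp W a = (if W = W' then a else 0)"
  using comp_wd[OF wd_single[OF assms]] by simp

lemma wd_add:
  assumes "wd a f" "wd b g"
  shows "wd (a + b) (\<lambda>m. f m + g m)"
proof (rule wd_intro[where U="{m. f m \<noteq> 0} \<union> {m. g m \<noteq> 0}"])
  show "finite ({m. f m \<noteq> 0} \<union> {m. g m \<noteq> 0})" using wd_props(2) assms by auto
  show "a + b = (\<Sum>m\<in>{m. f m \<noteq> 0} \<union> {m. g m \<noteq> 0}. f m + g m)"
    using wd_sum_super[OF assms(1), of "{m. f m \<noteq> 0} \<union> {m. g m \<noteq> 0}"]
      wd_sum_super[OF assms(2), of "{m. f m \<noteq> 0} \<union> {m. g m \<noteq> 0}"]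
      wd_props(2) assms by (auto simp: sum.distrib)
  show "\<And>m. m \<notin> L \<Longrightarrow> f m + g m = 0"
    using wd_props(1)[OF assms(1)] wd_props(1)[OF assms(2)] by simp
  show "{m. f m + g m \<noteq> 0} \<subseteq> {m. f m \<noteq> 0} \<union> {m. g m \<noteq> 0}" by auto
  show "\<And>m. f m + g m \<in> eig m"
    using wd_props(3)[OF assms(1)] wd_props(3)[OF assms(2)] eig_add by blast
qed

lemma comp_add: "comp W (a + b) = comp W a + comp W b"
  using comp_wd[OF wd_add[OF the_wd the_wd]] unfolding comp_def by simp

lemma comp_zero: "comp W 0 = 0"
  using comp_eig[OF eig_0 L_zero] by simp

lemma comp_sum: "comp W (sum f S) = (\<Sum>i\<in>S. comp W (f i))"
  by (induction S rule: infinite_finite_induct) (simp_all add: comp_zero comp_add)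

lemma eps_eig:
  assumes "a \<in> eig m" "m \<in> L"
  shows "eps a = scale (pr m) a"
proof -
  have t: "(THE f. wd a f) = (\<lambda>w. if w = m then a else 0)"
    using the_wd_eq[OF wd_single[OF assms]] .
  show ?thesis
  proof (cases "a = 0")
    case True thus ?thesis unfolding lie_act_def t by simp
  next
    case False
    hence "{w. (if w = m then a else 0) \<noteq> 0} = {m}" by auto
    thus ?thesis unfolding lie_act_def t Let_def by simp
  qed
qed

lemma eps_zero: "eps 0 = 0"
  using eps_eig[OF eig_0 L_zero] by simp

end

context pset begin

lemma scale_diff_l: "scale (c - d) a = scale c a - scale d a"
  using scale_add_l[of c "-d" a] scale_minus_l by simp

lemma sep_char:
  assumes "m \<in> L" "m' \<in> L" "m \<noteq> m'"
  shows "\<exists>h::nat\<Rightarrow>'k. h \<in> torus r \<and> character r m h \<noteq> character r m' h"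
proof -
  obtain i where i: "m i \<noteq> m' i" using assms(3) by (meson ext)
  have ir: "i < r"
  proof (rule ccontr)
    assume "\<not> i < r"
    hence "m i = 0" "m' i = 0" using assms(1,2) unfolding char_lattice_def by auto
    thus False using i by simp
  qed
  define h :: "nat \<Rightarrow> 'k" where "h = (\<lambda>j. if j = i then 2 else 1)"
  have ht: "h \<in> torus r" unfolding torus_def h_def using ir by auto
  have ch: "character r n h = 2 powi n i" for n
  proof -
    have "character r n h = (\<Prod>j\<in>{..<r}. if j = i then 2 powi n j else 1)"
      unfolding character_def h_def by (rule prod.cong) auto
    also have "\<dots> = 2 powi n i" using ir by (simp add: prod.delta)
    finally show ?thesis .
  qed
  have "(2::'k) powi m i \<noteq> 2 powi m' i" using two_powi_inj i by blast
  hence "character r m h \<noteq> character r m' h" using ch by simp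
  thus ?thesis using ht by blast
qed

lemma grading:
  assumes S0: "0 \<in> S" and Sadd: "\<And>a b. a \<in> S \<Longrightarrow> b \<in> S \<Longrightarrow> a + b \<in> S"
    and Ssc: "\<And>c a. a \<in> S \<Longrightarrow> scale c a \<in> S"
    and Sact: "\<And>h a. h \<in> torus r \<Longrightarrow> a \<in> S \<Longrightarrow> act h a \<in> S"
  shows "wd a f \<Longrightarrow> a \<in> S \<Longrightarrow> f m \<in> S"
proof (induction "card {m. f m \<noteq> 0}" arbitrary: a f m rule: less_induct)
  case less
  note wd = less.prems(1)
  let ?N = "{m. f m \<noteq> 0}"
  have finN: "finite ?N" using wd_props(2)[OF wd] .
  have aN: "a = sum f ?N" using wd_props(4)[OF wd] .
  show ?case
  proof (cases "f m = 0")
    case True thus ?thesis using S0 by simp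
  next
    case fm: False
    show ?thesis
    proof (cases "?N = {m}")
      case True
      thus ?thesis using aN less.prems(2) by simp
    next
      case False
      then obtain m' where m': "f m' \<noteq> 0" "m' \<noteq> m" using fm by blast
      have mL: "m \<in> L" "m' \<in> L" using wd_props(1)[OF wd] fm m' by blast+
      obtain h :: "nat \<Rightarrow> 'k" where h: "h \<in> torus r" "character r m h \<noteq> character r m' h"
        using sep_char[OF mL(1,2)] m'(2) by metis
      define c' where "c' = character r m' h"
      define g where "g = (\<lambda>w. scale (character r w h - c') (f w))"
      have wdg: "wd (act h a - scale c' a) g"
      proof (rule wd_intro[where U="?N"])
        show "\<And>w. w \<notin> L \<Longrightarrow> g w = 0" using wd_props(1)[OF wd] g_def by simp
        show "finite ?N" by (rule finN)
        show "{w. g w \<noteq> 0} \<subseteq> ?N" unfolding g_def by auto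
        show "\<And>w. g w \<in> eig w" unfolding g_def using wd_props(3)[OF wd] eig_scale by blast
        have "act h a = (\<Sum>w\<in>?N. act h (f w))"
          using aN act_sum[OF h(1)] by metis
        also have "\<dots> = (\<Sum>w\<in>?N. scale (character r w h) (f w))"
          by (rule sum.cong) (use wd_props(3)[OF wd] h(1) in \<open>auto simp: eigenspace_def\<close>)
        finally have "act h a = (\<Sum>w\<in>?N. scale (character r w h) (f w))" .
        moreover have "scale c' a = (\<Sum>w\<in>?N. scale c' (f w))"
          using aN scale_sum_r by metis
        ultimately show "act h a - scale c' a = sum g ?N"
          unfolding g_def by (simp add: scale_diff_l sum_subtractf)
      qed
      have inS: "act h a - scale c' a \<in> S"
        using Sadd[OF Sact[OF h(1) less.prems(2)] Ssc[OF Ssc[OF less.prems(2)], of "-1" c']]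
        by (simp add: scale_minus_l scale_one)
      have sub: "{w. g w \<noteq> 0} \<subseteq> ?N - {m'}" unfolding g_def c'_def by auto
      have c1: "card {w. g w \<noteq> 0} \<le> card (?N - {m'})"
        by (rule card_mono) (use finN sub in auto)
      have c2: "card (?N - {m'}) < card ?N" by (rule card_Diff1_less[OF finN]) (use m' in simp)
      have "card {w. g w \<noteq> 0} < card ?N" using c1 c2 by linarith
      hence "g m \<in> S" using less.hyps wdg inS by blast
      hence "scale (inverse (character r m h - c')) (g m) \<in> S" by (rule Ssc)
      moreover have "character r m h - c' \<noteq> 0" using h(2) c'_def by simp
      ultimately show ?thesis unfolding g_def by (simp add: scale_inv)
    qed
  qed
qed

end

definition dq :: "'a::comm_ring_1 poly \<Rightarrow> 'a poly" where
  "dq q = (\<Sum>i\<le>degree q. monom (of_nat (Suc i) * coeff q (Suc i)) i)"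

lemma coeff_dq: "coeff (dq q) n = of_nat (Suc n) * coeff q (Suc n)"
proof -
  have "coeff (dq q) n = (\<Sum>i\<le>degree q. if i = n then of_nat (Suc i) * coeff q (Suc i) else 0)"
    unfolding dq_def coeff_sum by (simp add: eq_commute)
  also have "\<dots> = (if n \<in> {..degree q} then of_nat (Suc n) * coeff q (Suc n) else 0)"
    by (subst sum.delta) auto
  also have "\<dots> = of_nat (Suc n) * coeff q (Suc n)"
    by (auto simp: coeff_eq_0)
  finally show ?thesis .
qed

lemma dq_pCons: "dq (pCons a p) = p + pCons 0 (dq p)"
  by (rule poly_eqI) (auto simp: coeff_dq coeff_pCons' algebra_simps)

lemma dq_0[simp]: "dq 0 = 0"
  by (rule poly_eqI) (simp add: coeff_dq)

lemma deriv_poly: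
  assumes D0: "D 0 = 0" and Dadd: "\<And>a b. D (a + b) = D a + D b"
    and Dmul: "\<And>a b. D (a * b) = D a * b + a * D b"
  shows "D (poly q y) = poly (map_poly D q) y + poly (dq q) y * D y"
proof (induction q)
  case 0 thus ?case by (simp add: D0)
next
  case (pCons a p)
  have "map_poly D (pCons a p) = pCons (D a) (map_poly D p)"
    by (rule poly_eqI) (simp add: coeff_map_poly D0 coeff_pCons')
  thus ?case using pCons by (simp add: Dadd Dmul dq_pCons algebra_simps)
qed

context pset begin

definition inB :: "'a poly \<Rightarrow> bool" where "inB q \<longleftrightarrow> (\<forall>i. coeff q i \<in> B)"
definition hom :: "(nat \<Rightarrow> int) \<Rightarrow> 'a poly \<Rightarrow> bool" where
  "hom M q \<longleftrightarrow> (\<forall>i. coeff q i \<in> eig (M - of_nat i * m0))"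

lemma KS: "k_subalgebra scale B" using PS unfolding poisson_subalgebra_def by auto

lemma B1: "1 \<in> B" and B0: "0 \<in> B" and Badd: "a \<in> B \<Longrightarrow> b \<in> B \<Longrightarrow> a + b \<in> B"
  and Bmul: "a \<in> B \<Longrightarrow> b \<in> B \<Longrightarrow> a * b \<in> B" and Bneg: "a \<in> B \<Longrightarrow> - a \<in> B"
  and Bsc: "a \<in> B \<Longrightarrow> scale c a \<in> B"
  using KS unfolding k_subalgebra_def by auto

lemma Bbr: "a \<in> B \<Longrightarrow> b \<in> B \<Longrightarrow> br a b \<in> B"
  using PS unfolding poisson_subalgebra_def by auto

lemma Bdiff: "a \<in> B \<Longrightarrow> b \<in> B \<Longrightarrow> a - b \<in> B"
  using Badd Bneg by (metis diff_conv_add_uminus)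

lemma Bsum: "(\<And>i. i \<in> S \<Longrightarrow> f i \<in> B) \<Longrightarrow> sum f S \<in> B"
  by (induction S rule: infinite_finite_induct) (auto simp: B0 Badd)

lemma Bnat: "of_nat n \<in> B"
  by (induction n) (auto simp: B0 B1 Badd)

lemma Bsc1: "sc c \<in> B" using Bsc B1 by blast

lemma Bpow: "a \<in> B \<Longrightarrow> a ^ n \<in> B"
  by (induction n) (auto simp: B1 Bmul)

lemma Bact: "h \<in> torus r \<Longrightarrow> a \<in> B \<Longrightarrow> act h a \<in> B"
  using HB unfolding H_stable_def by auto

lemma comp_B: "b \<in> B \<Longrightarrow> comp W b \<in> B"
  unfolding comp_def
  by (rule grading[OF B0 Badd Bsc Bact the_wd])

lemma comp_eig_mem: "comp W a \<in> eig W"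
  unfolding comp_def using wd_props(3)[OF the_wd] .

lemma comp_L: "comp W a \<noteq> 0 \<Longrightarrow> W \<in> L"
  unfolding comp_def using wd_props(1)[OF the_wd] by blast

lemma comp_expand: "a = (\<Sum>w\<in>{w. comp w a \<noteq> 0}. comp w a)"
  and comp_fin: "finite {w. comp w a \<noteq> 0}"
  unfolding comp_def using wd_props(4)[OF the_wd] wd_props(2)[OF the_wd] by auto

lemma comp_mult_eig:
  assumes e: "e \<in> eig W0" "W0 \<in> L"
  shows "comp M (c * e) = comp (M - W0) c * e"
proof -
  let ?S = "{w. comp w c \<noteq> 0}"
  have "c * e = (\<Sum>w\<in>?S. comp w c * e)"
    by (subst comp_expand[of c]) (simp add: sum_distrib_right)
  hence "comp M (c * e) = (\<Sum>w\<in>?S. comp M (comp w c * e))" by (simp add: comp_sum)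
  also have "\<dots> = (\<Sum>w\<in>?S. if w = M - W0 then comp w c * e else 0)"
  proof (rule sum.cong)
    fix w assume w: "w \<in> ?S"
    have "comp w c * e \<in> eig (w + W0)" by (rule eig_mult[OF comp_eig_mem e(1)])
    moreover have "w + W0 \<in> L" using comp_L w e(2) L_add by auto
    ultimately have "comp M (comp w c * e) = (if M = w + W0 then comp w c * e else 0)"
      by (rule comp_eig)
    moreover have "(M = w + W0) = (w = M - W0)" by (auto simp: algebra_simps)
    ultimately show "comp M (comp w c * e) = (if w = M - W0 then comp w c * e else 0)" by simp
  qed simp
  also have "\<dots> = (if M - W0 \<in> ?S then comp (M - W0) c * e else 0)"
    by (rule sum.delta[OF comp_fin])
  also have "\<dots> = comp (M - W0) c * e" by auto
  finally show ?thesis .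
qed

lemma memT: "inB q \<Longrightarrow> poly q x = a \<Longrightarrow> a \<in> {poly q x | q. inB q}"
  by auto

lemma inB_const: "b \<in> B \<Longrightarrow> inB [:b:]"
  unfolding inB_def by (auto simp: coeff_pCons' B0)

lemma gen_rep: "\<exists>q. inB q \<and> poly q x = a"
proof -
  let ?T = "{poly q x | q. inB q}"
  have ksub: "k_subalgebra scale ?T"
    unfolding k_subalgebra_def
  proof (intro conjI ballI allI)
    show "1 \<in> ?T" by (rule memT[OF inB_const[OF B1]]) simp
    show "0 \<in> ?T" by (rule memT[OF inB_const[OF B0]]) simp
    fix a b assume "a \<in> ?T" "b \<in> ?T"
    then obtain p q where pq: "inB p" "inB q" "a = poly p x" "b = poly q x" by auto
    have "inB (p + q)" using pq unfolding inB_def by (auto intro: Badd)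
    thus "a + b \<in> ?T" by (rule memT) (simp add: pq)
    have "inB (p * q)" using pq unfolding inB_def coeff_mult by (auto intro!: Bsum Bmul)
    thus "a * b \<in> ?T" by (rule memT) (simp add: pq)
  next
    fix a assume "a \<in> ?T"
    then obtain p where p: "inB p" "a = poly p x" by auto
    have "inB (- p)" using p unfolding inB_def by (auto intro: Bneg)
    thus "- a \<in> ?T" by (rule memT) (simp add: p)
  next
    fix c a assume "a \<in> ?T"
    then obtain p where p: "inB p" "a = poly p x" by auto
    have "inB (smult (sc c) p)" using p unfolding inB_def by (auto intro: Bmul Bsc1)
    thus "scale c a \<in> ?T" by (rule memT) (simp add: p scale_eq[of c "poly p x"])
  qed
  have "insert x B \<subseteq> ?T"
  proof
    fix y assume "y \<in> insert x B"
    then consider "y = x" | "y \<in> B" by auto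
    thus "y \<in> ?T"
    proof cases
      case 1
      have "inB [:0, 1:]" unfolding inB_def by (auto simp: coeff_pCons' B0 B1)
      thus ?thesis by (rule memT) (simp add: 1)
    next
      case 2
      show ?thesis by (rule memT[OF inB_const[OF 2]]) simp
    qed
  qed
  hence "generated_subalgebra scale (insert x B) \<subseteq> ?T"
    unfolding generated_subalgebra_def using ksub by blast
  hence "a \<in> ?T" using GEN by auto
  thus ?thesis by auto
qed

lemma HR:
  assumes a: "a \<in> eig M" "M \<in> L"
  shows "\<exists>q. inB q \<and> hom M q \<and> poly q x = a"
proof -
  obtain q0 where q0: "inB q0" "poly q0 x = a" using gen_rep by blast
  let ?N = "degree q0"
  define q where "q = (\<Sum>i\<le>?N. monom (comp (M - of_nat i * m0) (coeff q0 i)) i)"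
  have cq: "coeff q n = (if n \<le> ?N then comp (M - of_nat n * m0) (coeff q0 n) else 0)" for n
  proof -
    have "coeff q n = (\<Sum>i\<le>?N. if i = n then comp (M - of_nat i * m0) (coeff q0 i) else 0)"
      unfolding q_def coeff_sum by (simp add: eq_commute)
    also have "\<dots> = (if n \<in> {..?N} then comp (M - of_nat n * m0) (coeff q0 n) else 0)"
      by (subst sum.delta) auto
    finally show ?thesis by simp
  qed
  have "inB q" unfolding inB_def cq using q0(1) comp_B B0 unfolding inB_def by auto
  moreover have "hom M q" unfolding hom_def cq using comp_eig_mem eig_0 by auto
  moreover have "poly q x = a"
  proof -
    have "a = comp M a" using comp_eig[OF a] by simp
    also have "\<dots> = comp M (\<Sum>i\<le>?N. coeff q0 i * x ^ i)" using q0(2) poly_altdef by metis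
    also have "\<dots> = (\<Sum>i\<le>?N. comp M (coeff q0 i * x ^ i))" by (rule comp_sum)
    also have "\<dots> = (\<Sum>i\<le>?N. comp (M - of_nat i * m0) (coeff q0 i) * x ^ i)"
      by (rule sum.cong[OF refl], rule comp_mult_eig[OF eig_pow[OF xE] L_nat[OF m0L]])
    also have "\<dots> = poly q x" unfolding q_def poly_sum poly_monom ..
    finally show ?thesis by simp
  qed
  ultimately show ?thesis by blast
qed

end

context pset begin

definition HPP :: "'a set \<Rightarrow> bool" where
  "HPP P \<longleftrightarrow> P \<in> H_poisson_primes r act br UNIV"

lemma HPP_unf: "HPP P \<Longrightarrow> (0 \<in> P \<and> (\<forall>a\<in>P. \<forall>b\<in>P. a + b \<in> P) \<and> (\<forall>s. \<forall>p\<in>P. s * p \<in> P))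
   \<and> P \<noteq> UNIV \<and> (\<forall>a b. a * b \<in> P \<longrightarrow> a \<in> P \<or> b \<in> P) \<and> (\<forall>s. \<forall>p\<in>P. br s p \<in> P)
   \<and> (\<forall>h\<in>torus r. act h ` P \<subseteq> P)"
  unfolding HPP_def H_poisson_primes_def poisson_prime_in_def prime_ideal_in_def
    ideal_in_def H_stable_def by auto

lemma P0: "HPP P \<Longrightarrow> 0 \<in> P" using HPP_unf by blast
lemma Padd: "HPP P \<Longrightarrow> a \<in> P \<Longrightarrow> b \<in> P \<Longrightarrow> a + b \<in> P" using HPP_unf by blast
lemma Pmul: "HPP P \<Longrightarrow> a \<in> P \<Longrightarrow> s * a \<in> P" using HPP_unf by blast
lemma Pprime: "HPP P \<Longrightarrow> a * b \<in> P \<Longrightarrow> a \<in> P \<or> b \<in> P" using HPP_unf by blast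
lemma Pne: "HPP P \<Longrightarrow> P \<noteq> UNIV" using HPP_unf by blast
lemma Pbr: "HPP P \<Longrightarrow> a \<in> P \<Longrightarrow> br s a \<in> P" using HPP_unf by blast
lemma Pact: "HPP P \<Longrightarrow> h \<in> torus r \<Longrightarrow> a \<in> P \<Longrightarrow> act h a \<in> P" using HPP_unf by blast

context
  fixes P assumes HP: "HPP P"
begin

lemma P1: "1 \<notin> P"
proof
  assume "1 \<in> P"
  hence "\<forall>a. a \<in> P" using Pmul[OF HP, of 1] by (metis mult_1_right)
  thus False using Pne[OF HP] by auto
qed

lemma Pmulr: "a \<in> P \<Longrightarrow> a * s \<in> P" using Pmul[OF HP] by (metis mult.commute)
lemma Pneg: "a \<in> P \<Longrightarrow> - a \<in> P" using Pmul[OF HP, of a "-1"] by simp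
lemma Pdiff: "a \<in> P \<Longrightarrow> b \<in> P \<Longrightarrow> a - b \<in> P"
  using Padd[OF HP] Pneg by (metis diff_conv_add_uminus)
lemma Pdiff2: "a - b \<in> P \<Longrightarrow> b \<in> P \<Longrightarrow> a \<in> P"
  using Padd[OF HP] by fastforce
lemma Psc: "a \<in> P \<Longrightarrow> scale c a \<in> P" using Pmul[OF HP] scale_eq by metis
lemma Psum: "(\<And>i. i \<in> S \<Longrightarrow> f i \<in> P) \<Longrightarrow> sum f S \<in> P"
  by (induction S rule: infinite_finite_induct) (auto simp: P0[OF HP] Padd[OF HP])
lemma Pbrl: "a \<in> P \<Longrightarrow> br a s \<in> P" using Pbr[OF HP] Pneg br_anti by metis
lemma Punsc: "scale c a \<in> P \<Longrightarrow> c \<noteq> 0 \<Longrightarrow> a \<in> P"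
  using Psc[of "scale c a" "inverse c"] scale_inv by simp
lemma Punsc1: "sc c * a \<in> P \<Longrightarrow> c \<noteq> 0 \<Longrightarrow> a \<in> P"
  using Punsc scale_eq by metis
lemma Pnat: "of_nat n * a \<in> P \<Longrightarrow> n \<noteq> 0 \<Longrightarrow> a \<in> P"
  using Punsc[of "of_nat n"] scale_of_nat by simp
lemma Ppow: "s ^ N * a \<in> P \<Longrightarrow> s \<notin> P \<Longrightarrow> a \<in> P"
proof (induction N)
  case 0 thus ?case by simp
next
  case (Suc N)
  hence "s * (s ^ N * a) \<in> P" by (simp add: mult.assoc)
  thus ?case using Pprime[OF HP] Suc by blast
qed
lemma Pprime2: "a * b \<in> P \<Longrightarrow> a \<notin> P \<Longrightarrow> b \<in> P" using Pprime[OF HP] by blast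
lemma poly_inP: "(\<And>i. coeff q i \<in> P) \<Longrightarrow> poly q y \<in> P"
proof (induction q)
  case 0 thus ?case by (simp add: P0[OF HP])
next
  case (pCons a p)
  have "a \<in> P" using pCons(3)[of 0] by simp
  moreover have "\<And>i. coeff p i \<in> P" using pCons(3)[of "Suc _"] by simp
  ultimately show ?case using pCons Padd[OF HP] Pmul[OF HP] by simp
qed

end

definition dl :: "'a \<Rightarrow> 'a" where "dl b = br x b - eps b * x"

lemma dl_B: "b \<in> B \<Longrightarrow> dl b \<in> B" using DEL dl_def by auto
lemma dl_0: "dl 0 = 0" by (simp add: dl_def eps_zero)
lemma brx: "br x b = dl b + eps b * x" by (simp add: dl_def)
lemma eps_B: "b \<in> eig mb \<Longrightarrow> mb \<in> L \<Longrightarrow> b \<in> B \<Longrightarrow> eps b \<in> B"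
  using eps_eig Bsc by metis
lemma eps_eig_mem: "b \<in> eig mb \<Longrightarrow> mb \<in> L \<Longrightarrow> eps b \<in> eig mb"
  using eps_eig eig_scale by metis
lemma dl_eig: "b \<in> eig mb \<Longrightarrow> mb \<in> L \<Longrightarrow> dl b \<in> eig (mb + m0)"
proof -
  assume b: "b \<in> eig mb" "mb \<in> L"
  have "br x b \<in> eig (m0 + mb)" by (rule eig_br[OF xE b(1)])
  moreover have "eps b * x \<in> eig (mb + m0)" by (rule eig_mult[OF eps_eig_mem[OF b] xE])
  ultimately show ?thesis unfolding dl_def by (metis eig_diff add.commute)
qed

definition flag :: "'a set \<Rightarrow> bool" where
  "flag P \<longleftrightarrow> (\<exists>s t ms. s \<in> B \<and> t \<in> B \<and> ms \<in> L \<and> s \<in> eig ms \<and> t \<in> eig (ms + m0)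
      \<and> s \<notin> P \<and> s * x - t \<in> P)"

lemma Gamma_in:
  assumes HP: "HPP P" and st: "s * x - t \<in> P"
  shows "br b s * t - s * s * dl b - s * t * eps b - s * br b t \<in> P"
proof -
  have bx: "br b x = - (dl b + eps b * x)" using brx br_anti by metis
  have "s * br b (s * x - t) = s * (br b s * x + s * (- (dl b + eps b * x)) - br b t)"
    by (simp add: br_diff_r br_leib bx)
  also have "\<dots> = (s * x - t) * (br b s - s * eps b)
      + (br b s * t - s * s * dl b - s * t * eps b - s * br b t)"
    by (simp add: algebra_simps)
  finally have e: "s * br b (s * x - t) = (s * x - t) * (br b s - s * eps b)
      + (br b s * t - s * s * dl b - s * t * eps b - s * br b t)" .
  have "s * br b (s * x - t) \<in> P" using Pbr[OF HP st] Pmul[OF HP] by blast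
  moreover have "(s * x - t) * (br b s - s * eps b) \<in> P" using Pmulr[OF HP st] .
  ultimately show ?thesis using e Pdiff[OF HP] by (metis add_diff_cancel_left')
qed

lemma ring_id1:
  fixes s t s' t' D E BS BT BS' BT' :: "'b::comm_ring_1"
  shows "s' * s' * ((- BS) * t - s * s * D - s * t * E - s * (- BT))
       - s * s * ((- BS') * t' - s' * s' * D - s' * t' * E - s' * (- BT'))
     = (s * s') * (t * BS' + BT * s' - (t' * BS + BT' * s)) - (t * s' - t' * s) * (s * BS' + BS * s')
       - (s * s') * (t * s' - t' * s) * E"
  by (simp add: algebra_simps)

lemma Phi_identity:
  shows "s' * s' * (br b s * t - s * s * D - s * t * E - s * br b t)
       - s * s * (br b s' * t' - s' * s' * D - s' * t' * E - s' * br b t')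
     = (s * s') * br (t * s' - t' * s) b - (t * s' - t' * s) * br (s * s') b
       - (s * s') * (t * s' - t' * s) * E"
proof -
  have e1: "br (t * s' - t' * s) b = t * br s' b + br t b * s' - (t' * br s b + br t' b * s)"
    by (simp only: br_diff_l br_leib_l)
  have e2: "br (s * s') b = s * br s' b + br s b * s'" by (simp only: br_leib_l)
  have e3: "br b s = - br s b" "br b t = - br t b" "br b s' = - br s' b" "br b t' = - br t' b"
    using br_anti by blast+
  show ?thesis unfolding e1 e2 e3 by (rule ring_id1)
qed

lemma R2:
  assumes HP: "HPP P" and HQ: "HPP Q" and eq: "P \<inter> B = Q \<inter> B"
    and fP: "flag P" and fQ: "flag Q"
  shows "P \<subseteq> Q"
proof -
  obtain s t ms where st: "s \<in> B" "t \<in> B" "ms \<in> L" "s \<in> eig ms" "t \<in> eig (ms + m0)"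
      "s \<notin> P" "s * x - t \<in> P" using fP unfolding flag_def by blast
  obtain s' t' ms' where st': "s' \<in> B" "t' \<in> B" "ms' \<in> L" "s' \<in> eig ms'" "t' \<in> eig (ms' + m0)"
      "s' \<notin> Q" "s' * x - t' \<in> Q" using fQ unfolding flag_def by blast
  have s'P: "s' \<notin> P" using st' eq by blast
  define q where "q = s * s'"
  define v where "v = t * s' - t' * s"
  define Gm where "Gm = (\<lambda>s t b. br b s * t - s * s * dl b - s * t * eps b - s * br b t)"
  have qB: "q \<in> B" unfolding q_def using st st' Bmul by blast
  have vB: "v \<in> B" unfolding v_def using st st' Bmul Bdiff by blast
  have qE: "q \<in> eig (ms + ms')" unfolding q_def using eig_mult st st' by blast
  have vE: "v \<in> eig (ms + ms' + m0)"
  proof -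
    have "t * s' \<in> eig (ms + m0 + ms')" using eig_mult st st' by blast
    moreover have "t' * s \<in> eig (ms' + m0 + ms)" using eig_mult st st' by blast
    moreover have "ms + m0 + ms' = ms + ms' + m0" "ms' + m0 + ms = ms + ms' + m0"
      by (simp_all add: algebra_simps)
    ultimately show ?thesis unfolding v_def using eig_diff by metis
  qed
  have qL: "ms + ms' \<in> L" and vL: "ms + ms' + m0 \<in> L" using L_add st st' m0L by auto
  have Phi: "s' * s' * Gm s t b - s * s * Gm s' t' b \<in> P"
    if b: "b \<in> B" "b \<in> eig mb" "mb \<in> L" for b mb
  proof -
    have g1: "Gm s t b \<in> P" unfolding Gm_def by (rule Gamma_in[OF HP st(7)])
    have g2: "Gm s' t' b \<in> Q" unfolding Gm_def by (rule Gamma_in[OF HQ st'(7)])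
    have "Gm s' t' b \<in> B" unfolding Gm_def
      by (intro Bdiff Bmul Bbr dl_B eps_B[OF b(2,3)] b(1) st'(1) st'(2))
    hence "Gm s' t' b \<in> P" using g2 eq by blast
    have h1: "(s' * s') * Gm s t b \<in> P" by (rule Pmul[OF HP g1])
    have h2: "(s * s) * Gm s' t' b \<in> P" by (rule Pmul[OF HP \<open>Gm s' t' b \<in> P\<close>])
    show ?thesis by (rule Pdiff[OF HP h1 h2])
  qed
  have Phi2: "q * br v b - v * br q b - q * v * eps b \<in> P"
    if b: "b \<in> B" "b \<in> eig mb" "mb \<in> L" for b mb
    using Phi[OF b] Phi_identity[where s=s and t=t and s'=s' and t'=t' and b=b and D="dl b" and E="eps b"]
    unfolding Gm_def q_def v_def by simp
  have "q * br v q - v * br q q - q * v * eps q \<in> P" by (rule Phi2[OF qB qE qL])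
  hence "q * (br v q - sc (pr (ms + ms')) * v * q) \<in> P"
    using eps_eig[OF qE qL] scale_eq[of "pr (ms + ms')" q] by (simp add: br_self algebra_simps)
  moreover have qP: "q \<notin> P" using Pprime[OF HP, of s s'] st(6) s'P unfolding q_def by blast
  ultimately have X: "br v q - sc (pr (ms + ms')) * v * q \<in> P"
    using Pprime2[OF HP] by blast
  have "q * br v v - v * br q v - q * v * eps v \<in> P" by (rule Phi2[OF vB vE vL])
  moreover have "eps v = sc (pr (ms + ms')) * v + sc (pr m0) * v"
  proof -
    have "eps v = scale (pr (ms + ms') + pr m0) v" by (simp add: eps_eig[OF vE vL] pr_add)
    also have "\<dots> = scale (pr (ms + ms')) v + scale (pr m0) v" by (rule scale_add_l)
    also have "\<dots> = sc (pr (ms + ms')) * v + sc (pr m0) * v"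
      by (subst scale_eq, subst (2) scale_eq, rule refl)
    finally show ?thesis .
  qed
  ultimately have h1: "v * (br v q - sc (pr (ms + ms')) * v * q) - sc (pr m0) * (q * v * v) \<in> P"
    using br_anti[of q v] by (simp add: br_self algebra_simps)
  have h2: "v * (br v q - sc (pr (ms + ms')) * v * q) \<in> P" using X Pmul[OF HP] by blast
  have "sc (pr m0) * (q * v * v) = v * (br v q - sc (pr (ms + ms')) * v * q)
     - (v * (br v q - sc (pr (ms + ms')) * v * q) - sc (pr m0) * (q * v * v))" by simp
  hence "sc (pr m0) * (q * v * v) \<in> P" using Pdiff[OF HP h2 h1] by simp
  hence "q * v * v \<in> P" using Punsc1[OF HP] lam by blast
  hence "q * (v * v) \<in> P" by (simp add: mult.assoc)
  hence "v * v \<in> P" using Pprime2[OF HP] qP by blast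
  hence vP: "v \<in> P" using Pprime[OF HP] by blast
  hence vQ: "v \<in> Q" using vB eq by blast
  have "s' * (s * x - t) = s * (s' * x - t') - v" unfolding v_def by (simp add: algebra_simps)
  moreover have "s * (s' * x - t') - v \<in> Q" by (rule Pdiff[OF HQ Pmul[OF HQ st'(7)] vQ])
  ultimately have "s' * (s * x - t) \<in> Q" by simp
  hence gQ: "s * x - t \<in> Q" using Pprime[OF HQ] st'(6) by blast
  \<comment> \<open>every element is congruent to an element of B after multiplying by a power of s\<close>
  let ?g = "s * x - t"
  let ?U = "{a. \<exists>N b e. b \<in> B \<and> s ^ N * a = b + ?g * e}"
  have ksub: "k_subalgebra scale ?U"
    unfolding k_subalgebra_def
  proof (intro conjI ballI allI)
    have "s ^ 0 * 1 = 1 + ?g * 0" by simp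
    thus "1 \<in> ?U" using B1 by blast
    show "0 \<in> ?U" using B0 by (auto intro!: exI[of _ 0])
    fix a a' assume "a \<in> ?U" "a' \<in> ?U"
    then obtain N b e N' b' e' where h: "b \<in> B" "s ^ N * a = b + ?g * e"
      "b' \<in> B" "s ^ N' * a' = b' + ?g * e'" by blast
    have "s ^ (N + N') * (a + a') = (s ^ N' * b + s ^ N * b') + ?g * (s ^ N' * e + s ^ N * e')"
    proof -
      have "s ^ (N + N') * (a + a') = s ^ N' * (s ^ N * a) + s ^ N * (s ^ N' * a')"
        by (simp add: power_add algebra_simps)
      also have "\<dots> = s ^ N' * (b + ?g * e) + s ^ N * (b' + ?g * e')" by (simp only: h(2) h(4))
      also have "\<dots> = (s ^ N' * b + s ^ N * b') + ?g * (s ^ N' * e + s ^ N * e')"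
        by (simp add: algebra_simps)
      finally show ?thesis .
    qed
    moreover have "s ^ N' * b + s ^ N * b' \<in> B"
      by (intro Badd Bmul Bpow h(1) h(3) st(1))
    ultimately show "a + a' \<in> ?U" by blast
    have "s ^ (N + N') * (a * a') = b * b' + ?g * (e * b' + b * e' + ?g * e * e')"
    proof -
      have "s ^ (N + N') * (a * a') = (s ^ N * a) * (s ^ N' * a')"
        by (simp add: power_add algebra_simps)
      also have "\<dots> = (b + ?g * e) * (b' + ?g * e')" by (simp only: h(2) h(4))
      also have "\<dots> = b * b' + ?g * (e * b' + b * e' + ?g * e * e')"
        by (simp add: algebra_simps)
      finally show ?thesis .
    qed
    moreover have "b * b' \<in> B" using h Bmul by blast
    ultimately show "a * a' \<in> ?U" by blast
  next
    fix a assume "a \<in> ?U"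
    then obtain N b e where h: "b \<in> B" "s ^ N * a = b + ?g * e" by blast
    have "s ^ N * (- a) = - (s ^ N * a)" by simp
    hence "s ^ N * (- a) = - b + ?g * (- e)" using h(2) by simp
    moreover have "- b \<in> B" using h Bneg by blast
    ultimately show "- a \<in> ?U" by blast
  next
    fix c a assume "a \<in> ?U"
    then obtain N b e where h: "b \<in> B" "s ^ N * a = b + ?g * e" by blast
    have "s ^ N * scale c a = sc c * b + ?g * (sc c * e)"
    proof -
      have "s ^ N * scale c a = sc c * (s ^ N * a)" using scale_eq[of c a] by (simp add: algebra_simps)
      also have "\<dots> = sc c * (b + ?g * e)" by (simp only: h(2))
      finally show ?thesis by (simp add: algebra_simps)
    qed
    moreover have "sc c * b \<in> B" using h Bmul Bsc1 by blast
    ultimately show "scale c a \<in> ?U" by blast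
  qed
  have "insert x B \<subseteq> ?U"
  proof
    fix y assume "y \<in> insert x B"
    then consider "y = x" | "y \<in> B" by auto
    thus "y \<in> ?U"
    proof cases
      case 1
      have "s ^ 1 * y = t + ?g * 1" using 1 by simp
      thus ?thesis using st(2) by blast
    next
      case 2
      have "s ^ 0 * y = y + ?g * 0" by simp
      thus ?thesis using 2 by blast
    qed
  qed
  hence "generated_subalgebra scale (insert x B) \<subseteq> ?U"
    unfolding generated_subalgebra_def using ksub by blast
  hence UU: "UNIV \<subseteq> ?U" using GEN by simp
  have allU: "a \<in> ?U" for a by (rule subsetD[OF UU]) simp
  show "P \<subseteq> Q"
  proof
    fix a assume aP: "a \<in> P"
    have "a \<in> ?U" by (rule allU)
    then obtain N b e where h: "b \<in> B" "s ^ N * a = b + ?g * e" by blast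
    have "b = s ^ N * a - ?g * e" using h by simp
    moreover have "s ^ N * a - ?g * e \<in> P" by (rule Pdiff[OF HP Pmul[OF HP aP] Pmulr[OF HP st(7)]])
    ultimately have "b \<in> P" by simp
    hence "b \<in> Q" using h(1) eq by blast
    hence "b + ?g * e \<in> Q" by (rule Padd[OF HQ _ Pmulr[OF HQ gQ]])
    hence "s ^ N * a \<in> Q" using h(2) by simp
    moreover have "s \<notin> Q" using st(1,6) eq by blast
    ultimately show "a \<in> Q" using Ppow[OF HQ] by blast
  qed
qed

end

lemma map_pCons0: "f 0 = 0 \<Longrightarrow> map_poly f (pCons a p) = pCons (f a) (map_poly f p)"
  by (rule poly_eqI) (simp add: coeff_map_poly coeff_pCons')

lemma poly_map_split:
  assumes "f 0 = 0" "h 0 = 0"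
  shows "poly (map_poly (\<lambda>a. f a + h a * y) q) y = poly (map_poly f q) y + y * poly (map_poly h q) y"
proof (induction q)
  case 0 thus ?case by simp
next
  case (pCons a p)
  define F where "F = (\<lambda>a. f a + h a * y)"
  have F0: "F 0 = 0" using assms by (simp add: F_def)
  have "poly (map_poly F (pCons a p)) y = F a + y * poly (map_poly F p) y"
    by (simp only: map_pCons0[where f=F, OF F0] poly_pCons)
  also have "\<dots> = poly (map_poly f (pCons a p)) y + y * poly (map_poly h (pCons a p)) y"
    using pCons(2) unfolding F_def
    by (simp add: map_pCons0[where f=f, OF assms(1)] map_pCons0[where f=h, OF assms(2)] algebra_simps)
  finally show ?case unfolding F_def .
qed

lemma coeff_lin: "coeff (p * [:u, w:]) i = coeff p i * u + (if i = 0 then 0 else coeff p (i - 1) * w)"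
  by (simp add: coeff_pCons' mult.commute)

lemma ring_id2:
  fixes n c d x g Dg Y dc dd BCD BDC BDD BCC ss sl sM ed ec Z Kq DLd DLc G :: "'b::comm_ring_1"
  assumes "BDD = 0" "BCC = 0" "BDC = - BCD" "ed = (ss + sl) * d" "ec = ss * c"
    "Z = sM * g - sl * (x * Dg)"
    "Kq = Y + c * d * Z + n * c * c * x * Z - c * Dg * (dd + ed * x) + d * Dg * (dc + ec * x)"
    "DLd = n * c * c * dd - c * BDD + d * BDC - c * d * ed"
    "DLc = n * c * c * dc - c * BCD + d * BCC - c * d * ec"
    "G = n * c * x + d"
  shows "n * c * c * Kq + sl * (c * c * G * G * Dg) = n * c * c * Y + n * c * c * c * sM * G * g - Dg * (c * DLd - d * DLc)"
  unfolding assms(7) assms(8) assms(9) assms(10) assms(6) assms(4) assms(5) assms(1) assms(2) assms(3)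
  by (simp add: algebra_simps)

context pset begin

lemma inB_add: "inB p \<Longrightarrow> inB q \<Longrightarrow> inB (p + q)" unfolding inB_def by (simp add: Badd)
lemma inB_diff: "inB p \<Longrightarrow> inB q \<Longrightarrow> inB (p - q)" unfolding inB_def by (simp add: Bdiff)
lemma inB_smult: "c \<in> B \<Longrightarrow> inB p \<Longrightarrow> inB (smult c p)" unfolding inB_def by (simp add: Bmul)
lemma inB_map: "f 0 = 0 \<Longrightarrow> (\<And>a. a \<in> B \<Longrightarrow> f a \<in> B) \<Longrightarrow> inB p \<Longrightarrow> inB (map_poly f p)"
  unfolding inB_def by (simp add: coeff_map_poly)
lemma inB_dq: "inB p \<Longrightarrow> inB (dq p)" unfolding inB_def coeff_dq by (blast intro: Bmul Bnat)
lemma inB_lin: "inB p \<Longrightarrow> u \<in> B \<Longrightarrow> w \<in> B \<Longrightarrow> inB (p * [:u, w:])"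
  unfolding inB_def coeff_lin by (simp add: Bmul Badd B0)

lemma hom_cong: "hom M p \<Longrightarrow> M = M' \<Longrightarrow> hom M' p" by simp
lemma hom_add: "hom M p \<Longrightarrow> hom M q \<Longrightarrow> hom M (p + q)" unfolding hom_def by (simp add: eig_add)
lemma hom_diff: "hom M p \<Longrightarrow> hom M q \<Longrightarrow> hom M (p - q)" unfolding hom_def by (simp add: eig_diff)
lemma hom_smult: "c \<in> eig m \<Longrightarrow> hom M p \<Longrightarrow> hom (m + M) (smult c p)"
  unfolding hom_def
proof
  fix i assume "c \<in> eig m" "\<forall>i. coeff p i \<in> eig (M - of_nat i * m0)"
  hence "c * coeff p i \<in> eig (m + (M - of_nat i * m0))" using eig_mult by blast
  thus "coeff (smult c p) i \<in> eig (m + M - of_nat i * m0)" by (simp add: algebra_simps)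
qed
lemma hom_map_br: "b \<in> eig mb \<Longrightarrow> hom M p \<Longrightarrow> hom (mb + M) (map_poly (br b) p)"
  unfolding hom_def
proof
  fix i assume "b \<in> eig mb" "\<forall>i. coeff p i \<in> eig (M - of_nat i * m0)"
  hence "br b (coeff p i) \<in> eig (mb + (M - of_nat i * m0))" using eig_br by blast
  thus "coeff (map_poly (br b) p) i \<in> eig (mb + M - of_nat i * m0)"
    by (simp add: algebra_simps coeff_map_poly)
qed
lemma hom_dq: "hom M p \<Longrightarrow> hom (M - m0) (dq p)"
  unfolding hom_def
proof
  fix i assume "\<forall>i. coeff p i \<in> eig (M - of_nat i * m0)"
  hence "of_nat (Suc i) * coeff p (Suc i) \<in> eig (M - of_nat (Suc i) * m0)" using eig_of_nat by blast
  moreover have "M - of_nat (Suc i) * m0 = M - m0 - of_nat i * m0" by (simp add: algebra_simps)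
  ultimately show "coeff (dq p) i \<in> eig (M - m0 - of_nat i * m0)" unfolding coeff_dq by (rule eig_cong)
qed
lemma hom_lin: "hom M p \<Longrightarrow> u \<in> eig (mw + m0) \<Longrightarrow> w \<in> eig mw \<Longrightarrow> hom (M + mw + m0) (p * [:u, w:])"
  unfolding hom_def
proof
  fix i assume h: "\<forall>i. coeff p i \<in> eig (M - of_nat i * m0)" "u \<in> eig (mw + m0)" "w \<in> eig mw"
  have "coeff p i * u \<in> eig (M - of_nat i * m0 + (mw + m0))" using h eig_mult by blast
  hence A: "coeff p i * u \<in> eig (M + mw + m0 - of_nat i * m0)" by (simp add: algebra_simps)
  have Bb: "(if i = 0 then 0 else coeff p (i - 1) * w) \<in> eig (M + mw + m0 - of_nat i * m0)"
  proof (cases i)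
    case 0 thus ?thesis using eig_0 by simp
  next
    case (Suc j)
    have "coeff p j * w \<in> eig (M - of_nat j * m0 + mw)" using h eig_mult by blast
    moreover have "M - of_nat j * m0 + mw = M + mw + m0 - of_nat i * m0" using Suc by (simp add: algebra_simps)
    ultimately show ?thesis using Suc by simp
  qed
  show "coeff (p * [:u, w:]) i \<in> eig (M + mw + m0 - of_nat i * m0)"
    unfolding coeff_lin using eig_add[OF A Bb] .
qed

lemma poly_deg0: "degree q = 0 \<Longrightarrow> poly q y = coeff q 0"
proof -
  assume "degree q = 0"
  hence "poly q y = poly [:coeff q 0:] y" using degree_0_id by metis
  thus ?thesis by simp
qed

lemma trim:
  assumes HP: "HPP P"
    and noRel: "\<forall>k<n. \<not> (\<exists>q M. inB q \<and> hom M q \<and> M \<in> L \<and> poly q x \<in> P \<and> degree q = k \<and> coeff q k \<notin> P)"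
  shows "inB q \<Longrightarrow> hom M q \<Longrightarrow> M \<in> L \<Longrightarrow> poly q x \<in> P \<Longrightarrow> degree q < n \<Longrightarrow> coeff q i \<in> P"
proof (induction "degree q" arbitrary: q i rule: less_induct)
  case less
  let ?d = "degree q"
  let ?l = "coeff q ?d"
  have lP: "?l \<in> P" using noRel less.prems by blast
  show ?case
  proof (cases "i = ?d")
    case True thus ?thesis using lP by simp
  next
    case False
    show ?thesis
    proof (cases "i < ?d")
      case False
      hence "i > ?d" using \<open>i \<noteq> ?d\<close> by simp
      thus ?thesis using P0[OF HP] coeff_eq_0[of q i] by simp
    next
      case ilt: True
      define q' where "q' = q - monom ?l ?d"
      have cq': "coeff q' j = (if j = ?d then 0 else coeff q j)" for j
        unfolding q'_def by simp
      have "degree q' \<le> ?d - 1"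
        by (rule degree_le) (auto simp: cq' coeff_eq_0)
      hence dlt: "degree q' < ?d" using ilt by simp
      have "inB q'" using less.prems(1) B0 unfolding inB_def cq' by simp
      moreover have "hom M q'" using less.prems(2) eig_0 unfolding hom_def cq' by simp
      moreover have "poly q' x \<in> P"
      proof -
        have "poly q' x = poly q x - ?l * x ^ ?d" unfolding q'_def by (simp add: poly_monom)
        moreover have "?l * x ^ ?d \<in> P" by (rule Pmulr[OF HP lP])
        ultimately show ?thesis using Pdiff[OF HP less.prems(4)] by simp
      qed
      moreover have "degree q' < n" using dlt less.prems(5) by simp
      ultimately have "coeff q' i \<in> P" using less.hyps[OF dlt] less.prems(3) by blast
      thus ?thesis using cq' False by simp
    qed
  qed
qed

end

context pset begin

lemma R1:
  assumes HP: "HPP P" and q1: "inB q1" "hom M1 q1" "M1 \<in> L" "poly q1 x \<in> P"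
    "coeff q1 (degree q1) \<notin> P"
  shows "flag P"
proof -
  define Rel where "Rel k \<longleftrightarrow> (\<exists>q M. inB q \<and> hom M q \<and> M \<in> L \<and> poly q x \<in> P
      \<and> degree q = k \<and> coeff q k \<notin> P)" for k
  have R1: "Rel (degree q1)" unfolding Rel_def using q1 by blast
  define n where "n = (LEAST k. Rel k)"
  have Rn: "Rel n" unfolding n_def by (rule LeastI[where P=Rel, OF R1])
  have "\<forall>k<n. \<not> Rel k" unfolding n_def using not_less_Least by blast
  hence noRel: "\<forall>k<n. \<not> (\<exists>q M. inB q \<and> hom M q \<and> M \<in> L \<and> poly q x \<in> P
      \<and> degree q = k \<and> coeff q k \<notin> P)" unfolding Rel_def .
  obtain q M where qM: "inB q" "hom M q" "M \<in> L" "poly q x \<in> P" "degree q = n" "coeff q n \<notin> P"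
    using Rn unfolding Rel_def by blast
  have Min: "coeff q' i \<in> P" if "inB q'" "hom M' q'" "M' \<in> L" "poly q' x \<in> P" "degree q' < n"
    for q' M' i using trim[OF HP noRel that] .
  have n1: "n \<ge> 1"
  proof (rule ccontr)
    assume "\<not> n \<ge> 1"
    hence "degree q = 0" using qM(5) by simp
    hence "poly q x = coeff q 0" by (rule poly_deg0)
    moreover have "n = 0" using \<open>\<not> n \<ge> 1\<close> by simp
    ultimately show False using qM(4,6) by simp
  qed
  then obtain k where nk: "n = Suc k" by (metis Suc_pred' less_eq_Suc_le One_nat_def)
  define c where "c = coeff q n"
  define d where "d = coeff q (n - 1)"
  define ms where "ms = M - of_nat n * m0"
  have cB: "c \<in> B" and dB: "d \<in> B" using qM(1) unfolding inB_def c_def d_def by auto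
  have cE: "c \<in> eig ms" using qM(2) unfolding hom_def c_def ms_def by auto
  have dE: "d \<in> eig (ms + m0)"
  proof -
    have "d \<in> eig (M - of_nat (n - 1) * m0)" using qM(2) unfolding hom_def d_def by auto
    moreover have "M - of_nat (n - 1) * m0 = ms + m0" unfolding ms_def nk by (simp add: algebra_simps)
    ultimately show ?thesis by simp
  qed
  have msL: "ms \<in> L" unfolding ms_def using L_diff L_nat qM(3) m0L by blast
  have ms0L: "ms + m0 \<in> L" using L_add msL m0L by blast
  have cP: "c \<notin> P" using qM(6) c_def by simp
  have cq_hi: "coeff q i = 0" if "i > n" for i using coeff_eq_0[of q i] qM(5) that by simp
  have cdq_n: "coeff (dq q) (n - 1) = of_nat n * c" unfolding coeff_dq c_def nk by simp
  have cdq_hi: "coeff (dq q) i = 0" if "i \<ge> n" for i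
    unfolding coeff_dq using cq_hi[of "Suc i"] that by simp
  define Dl where "Dl b = of_nat n * c * c * dl b - c * br b d + d * br b c - c * d * eps b" for b
  have Dl0: "Dl 0 = 0" unfolding Dl_def by (simp add: dl_0 eps_zero)
  have StepB: "Dl b \<in> P" if b: "b \<in> B" "b \<in> eig mb" "mb \<in> L" for b mb
  proof -
    define eb where "eb = eps b"
    define db where "db = dl b"
    define e where "e = br b c - of_nat n * c * eb"
    define R where "R = smult c (map_poly (br b) q - dq q * [:db, eb:]) - smult e q"
    have ebB: "eb \<in> B" unfolding eb_def using eps_B b by blast
    have dbB: "db \<in> B" unfolding db_def using dl_B b by blast
    have ebE: "eb \<in> eig mb" unfolding eb_def using eps_eig_mem b by blast
    have dbE: "db \<in> eig (mb + m0)" unfolding db_def using dl_eig b by blast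
    have brbx: "br b x = - poly [:db, eb:] x"
      using br_anti[of b x] brx[of b] unfolding db_def eb_def by (simp add: mult.commute)
    have dv: "br b (poly q x) = poly (map_poly (br b) q) x + poly (dq q) x * br b x"
      by (rule deriv_poly) (simp_all add: br_add_r br_leib)
    have "poly R x = c * (poly (map_poly (br b) q) x - poly (dq q) x * poly [:db, eb:] x) - e * poly q x"
      unfolding R_def by (simp add: algebra_simps)
    also have "\<dots> = c * br b (poly q x) - e * poly q x"
    proof -
      have dv2: "br b (poly q x) = poly (map_poly (br b) q) x - poly (dq q) x * poly [:db, eb:] x"
        unfolding dv brbx by (simp only: mult_minus_right diff_conv_add_uminus)
      show ?thesis by (simp only: dv2)
    qed
    finally have polyR: "poly R x = c * br b (poly q x) - e * poly q x" .
    have RP: "poly R x \<in> P"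
      unfolding polyR by (rule Pdiff[OF HP Pmul[OF HP Pbr[OF HP qM(4)]] Pmul[OF HP qM(4)]])
    have eB: "e \<in> B" unfolding e_def by (intro Bdiff Bbr Bmul Bnat b(1) cB ebB)
    have eE: "e \<in> eig (mb + ms)"
    proof -
      have "br b c \<in> eig (mb + ms)" by (rule eig_br[OF b(2) cE])
      moreover have "of_nat n * c * eb \<in> eig (ms + mb)" by (rule eig_mult[OF eig_of_nat[OF cE] ebE])
      ultimately show ?thesis unfolding e_def by (metis eig_diff add.commute)
    qed
    have RB: "inB R" unfolding R_def
      by (intro inB_diff inB_smult cB eB qM(1) inB_lin inB_dq dbB ebB inB_map[where f="br b"] br_zero_r Bbr b(1))
    have h1: "hom (mb + M) (map_poly (br b) q)" by (rule hom_map_br[OF b(2) qM(2)])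
    have h2: "hom (M - m0 + mb + m0) (dq q * [:db, eb:])" by (rule hom_lin[OF hom_dq[OF qM(2)] dbE ebE])
    have h2': "hom (mb + M) (dq q * [:db, eb:])" by (rule hom_cong[OF h2]) (simp add: algebra_simps)
    have h3: "hom (ms + (mb + M)) (smult c (map_poly (br b) q - dq q * [:db, eb:]))"
      by (rule hom_smult[OF cE hom_diff[OF h1 h2']])
    have h4: "hom (ms + (mb + M)) (smult e q)"
      by (rule hom_cong[OF hom_smult[OF eE qM(2)]]) (simp add: algebra_simps)
    have RH: "hom (ms + (mb + M)) R" unfolding R_def by (rule hom_diff[OF h3 h4])
    have WL: "ms + (mb + M) \<in> L" using L_add msL b(3) qM(3) by blast
    have cR: "coeff R i = c * (br b (coeff q i) - (coeff (dq q) i * db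
        + (if i = 0 then 0 else coeff (dq q) (i - 1) * eb))) - e * coeff q i" for i
      unfolding R_def coeff_diff coeff_smult coeff_lin coeff_map_poly[where f="br b", OF br_zero_r] ..
    have "coeff R i = 0" if "i > n - 1" for i
    proof (cases "i = n")
      case True
      have "coeff R i = c * (br b c - (0 * db + of_nat n * c * eb)) - e * c"
        unfolding cR using True cdq_n cdq_hi[of n] c_def nk by simp
      thus ?thesis unfolding e_def by (simp add: algebra_simps)
    next
      case False
      hence ig: "i > n" using that nk by simp
      have "coeff (dq q) (i - 1) = 0" using cdq_hi[of "i - 1"] ig by simp
      thus ?thesis unfolding cR using cq_hi[OF ig] cdq_hi[of i] ig by simp
    qed
    hence "degree R \<le> n - 1" by (intro degree_le) blast
    hence "degree R < n" using nk by simp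
    hence cRP: "coeff R (n - 1) \<in> P" using Min[OF RB RH WL RP] by blast
    have T: "(if n - 1 = 0 then 0 else coeff (dq q) (n - 1 - 1) * eb) = (of_nat n - 1) * d * eb"
    proof (cases k)
      case 0 thus ?thesis using nk by simp
    next
      case (Suc j)
      have "coeff (dq q) (n - 1 - 1) = of_nat k * d" unfolding coeff_dq d_def nk Suc by simp
      thus ?thesis using nk Suc by simp
    qed
    have "coeff R (n - 1) = c * (br b d - (of_nat n * c * db + (of_nat n - 1) * d * eb)) - e * d"
      unfolding cR T[symmetric] using cdq_n d_def by simp
    also have "\<dots> = - Dl b" unfolding e_def Dl_def db_def eb_def by (simp add: algebra_simps)
    finally show ?thesis using cRP Pneg[OF HP] by (metis minus_minus)
  qed
  define G where "G = of_nat n * c * x + d"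
  have GP: "G \<in> P"
  proof (rule ccontr)
    assume GnP: "G \<notin> P"
    define g where "g = poly q x"
    define Dg where "Dg = poly (dq q) x"
    define Y where "Y = poly (map_poly Dl q) x"
    define Z where "Z = poly (map_poly eps q) x"
    have YP: "Y \<in> P" unfolding Y_def
    proof (rule poly_inP[OF HP])
      fix i
      have "coeff q i \<in> B" using qM(1) inB_def by blast
      moreover have "coeff q i \<in> eig (M - of_nat i * m0)" using qM(2) hom_def by blast
      moreover have "M - of_nat i * m0 \<in> L" using L_diff L_nat qM(3) m0L by blast
      ultimately show "coeff (map_poly Dl q) i \<in> P" using StepB by (simp add: coeff_map_poly Dl0)
    qed
    have brxg: "br x g = poly (map_poly dl q) x + x * Z"
    proof -
      have "br x g = poly (map_poly (br x) q) x + poly (dq q) x * br x x"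
        unfolding g_def by (rule deriv_poly) (simp_all add: br_add_r br_leib)
      also have "\<dots> = poly (map_poly (br x) q) x" by (simp add: br_self)
      also have "map_poly (br x) q = map_poly (\<lambda>a. dl a + eps a * x) q"
        using brx by presburger
      also have "poly \<dots> x = poly (map_poly dl q) x + x * Z"
        unfolding Z_def by (rule poly_map_split[where f=dl and h=eps, OF dl_0 eps_zero])
      finally show ?thesis .
    qed
    have Zeq: "Z = sc (pr M) * g - sc (pr m0) * (x * Dg)"
    proof -
      have "map_poly eps q = smult (sc (pr M)) q - smult (sc (pr m0)) (pCons 0 (dq q))"
      proof (rule poly_eqI)
        fix i
        have ci: "coeff q i \<in> eig (M - of_nat i * m0)" using qM(2) hom_def by blast
        have Li: "M - of_nat i * m0 \<in> L" using L_diff L_nat qM(3) m0L by blast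
        have "eps (coeff q i) = scale (pr M - of_nat i * pr m0) (coeff q i)"
          using eps_eig[OF ci Li] by (simp add: pr_diff pr_nat)
        also have "\<dots> = sc (pr M) * coeff q i - of_nat i * (sc (pr m0) * coeff q i)"
          by (simp add: scale_diff_l scale_of_nat flip: scale_scale) (metis scale_eq scale_of_nat mult.assoc)
        finally have "eps (coeff q i) = sc (pr M) * coeff q i - of_nat i * (sc (pr m0) * coeff q i)" .
        thus "coeff (map_poly eps q) i = coeff (smult (sc (pr M)) q - smult (sc (pr m0)) (pCons 0 (dq q))) i"
          by (cases i) (simp_all add: coeff_map_poly eps_zero coeff_dq algebra_simps)
      qed
      thus ?thesis unfolding Z_def g_def Dg_def by simp
    qed
    have brdg: "br d g = poly (map_poly (br d) q) x - Dg * (dl d + eps d * x)"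
    proof -
      have "br d g = poly (map_poly (br d) q) x + Dg * br d x"
        unfolding g_def Dg_def by (rule deriv_poly) (simp_all add: br_add_r br_leib)
      thus ?thesis using br_anti[of d x] brx[of d] by (simp add: algebra_simps)
    qed
    have brcg: "br c g = poly (map_poly (br c) q) x - Dg * (dl c + eps c * x)"
    proof -
      have "br c g = poly (map_poly (br c) q) x + Dg * br c x"
        unfolding g_def Dg_def by (rule deriv_poly) (simp_all add: br_add_r br_leib)
      thus ?thesis using br_anti[of c x] brx[of c] by (simp add: algebra_simps)
    qed
    have comb: "smult (of_nat n * c * c) (map_poly dl q) + smult c (map_poly (br d) q)
        - smult d (map_poly (br c) q) = map_poly Dl q + smult (c * d) (map_poly eps q)"
    proof (rule poly_eqI)
      fix i
      show "coeff (smult (of_nat n * c * c) (map_poly dl q) + smult c (map_poly (br d) q)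
        - smult d (map_poly (br c) q)) i = coeff (map_poly Dl q + smult (c * d) (map_poly eps q)) i"
        using br_anti[of "coeff q i" d] br_anti[of "coeff q i" c]
        by (simp add: coeff_map_poly dl_0 eps_zero Dl0 Dl_def algebra_simps)
    qed
    define Kq where "Kq = of_nat n * c * c * br x g + c * br d g - d * br c g"
    have KqP: "Kq \<in> P" unfolding Kq_def g_def
      by (intro Pdiff[OF HP] Padd[OF HP] Pmul[OF HP] Pbr[OF HP] qM(4))
    have Kq_eq: "Kq = Y + c * d * Z + of_nat n * c * c * x * Z - c * Dg * (dl d + eps d * x)
        + d * Dg * (dl c + eps c * x)"
    proof -
      have "poly (smult (of_nat n * c * c) (map_poly dl q) + smult c (map_poly (br d) q)
        - smult d (map_poly (br c) q)) x = Y + c * d * Z"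
        unfolding comb Y_def Z_def by simp
      hence "of_nat n * c * c * poly (map_poly dl q) x + c * poly (map_poly (br d) q) x
        - d * poly (map_poly (br c) q) x = Y + c * d * Z" by simp
      thus ?thesis unfolding Kq_def brxg brdg brcg by (simp add: algebra_simps)
    qed
    have epsd: "eps d = (sc (pr ms) + sc (pr m0)) * d"
      using eps_eig[OF dE ms0L] pr_add scale_add_l scale_eq by metis
    have epsc: "eps c = sc (pr ms) * c" using eps_eig[OF cE msL] scale_eq by metis
    have id: "of_nat n * c * c * Kq + sc (pr m0) * (c * c * G * G * Dg)
        = of_nat n * c * c * Y + of_nat n * c * c * c * sc (pr M) * G * g - Dg * (c * Dl d - d * Dl c)"
      by (rule ring_id2[where BDD="br d d" and BCC="br c c" and BDC="br d c" and BCD="br c d"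
            and ed="eps d" and ec="eps c" and ss="sc (pr ms)" and dd="dl d" and dc="dl c"])
        (simp_all add: br_self br_anti[of d c] epsd epsc Zeq Kq_eq Dl_def G_def)
    have DlP: "Dl d \<in> P" "Dl c \<in> P" using StepB dB dE ms0L cB cE msL by blast+
    have "of_nat n * c * c * Y + of_nat n * c * c * c * sc (pr M) * G * g - Dg * (c * Dl d - d * Dl c) \<in> P"
      unfolding g_def
      by (intro Pdiff[OF HP] Padd[OF HP] Pmul[OF HP] YP qM(4) Pmulr[OF HP] DlP)
    hence AS: "of_nat n * c * c * Kq + sc (pr m0) * (c * c * G * G * Dg) \<in> P" by (simp only: id)
    have A: "of_nat n * c * c * Kq \<in> P" by (rule Pmul[OF HP KqP])
    have "sc (pr m0) * (c * c * G * G * Dg) = (of_nat n * c * c * Kq + sc (pr m0) * (c * c * G * G * Dg))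
      - of_nat n * c * c * Kq" by simp
    hence "sc (pr m0) * (c * c * G * G * Dg) \<in> P" using Pdiff[OF HP AS A] by simp
    hence "c * c * G * G * Dg \<in> P" using Punsc1[OF HP] lam by blast
    hence "c * (c * (G * (G * Dg))) \<in> P" by (simp add: mult.assoc)
    hence DgP: "Dg \<in> P" using Pprime2[OF HP] cP GnP by blast
    have "degree (dq q) \<le> n - 1" by (intro degree_le) (use cdq_hi in auto)
    hence "degree (dq q) < n" using nk by simp
    moreover have "M - m0 \<in> L" using L_diff qM(3) m0L by blast
    ultimately have "coeff (dq q) (n - 1) \<in> P"
      using Min[OF inB_dq[OF qM(1)] hom_dq[OF qM(2)]] DgP Dg_def by blast
    hence "of_nat n * c \<in> P" using cdq_n by simp
    thus False using Pnat[OF HP] cP nk by blast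
  qed
  show "flag P" unfolding flag_def
  proof (intro exI conjI)
    show "of_nat n * c \<in> B" by (intro Bmul Bnat cB)
    show "- d \<in> B" by (rule Bneg[OF dB])
    show "ms \<in> L" by (rule msL)
    show "of_nat n * c \<in> eig ms" by (rule eig_of_nat[OF cE])
    show "- d \<in> eig (ms + m0)" by (rule eig_minus[OF dE])
    show "of_nat n * c \<notin> P" using Pnat[OF HP] cP nk by blast
    show "of_nat n * c * x - - d \<in> P" using GP G_def by simp
  qed
qed

end

context pset begin

lemma no_rel:
  assumes HP: "HPP P" and nf: "\<not> flag P"
  shows "\<forall>k<n. \<not> (\<exists>q M. inB q \<and> hom M q \<and> M \<in> L \<and> poly q x \<in> P \<and> degree q = k \<and> coeff q k \<notin> P)"
  using R1[OF HP] nf by blast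

lemma unflag_sub:
  assumes HP: "HPP P" and HQ: "HPP Q" and eq: "P \<inter> B = Q \<inter> B" and nf: "\<not> flag P"
  shows "P \<subseteq> Q"
proof
  fix a assume aP: "a \<in> P"
  have compP: "comp W a \<in> P" for W
    unfolding comp_def by (rule grading[OF P0[OF HP] Padd[OF HP] Psc[OF HP] Pact[OF HP] the_wd aP])
  have compQ: "comp W a \<in> Q" if nz: "comp W a \<noteq> 0" for W
  proof -
    have WL: "W \<in> L" by (rule comp_L[OF nz])
    obtain q where q: "inB q" "hom W q" "poly q x = comp W a" using HR[OF comp_eig_mem WL] by blast
    have "coeff q i \<in> Q" for i
    proof -
      have "coeff q i \<in> P"
        by (rule trim[OF HP no_rel[OF HP nf, of "Suc (degree q)"] q(1) q(2) WL]) (use q(3) compP in auto)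
      moreover have "coeff q i \<in> B" using q(1) inB_def by blast
      ultimately show ?thesis using eq by blast
    qed
    hence "poly q x \<in> Q" by (rule poly_inP[OF HQ])
    thus ?thesis using q(3) by simp
  qed
  have "a = (\<Sum>w\<in>{w. comp w a \<noteq> 0}. comp w a)" by (rule comp_expand)
  moreover have "(\<Sum>w\<in>{w. comp w a \<noteq> 0}. comp w a) \<in> Q" by (rule Psum[OF HQ]) (use compQ in blast)
  ultimately show "a \<in> Q" by simp
qed

lemma contract:
  assumes HP: "HPP P"
  shows "P \<inter> B \<in> H_poisson_primes r act br B"
proof -
  have "ideal_in B (P \<inter> B)" unfolding ideal_in_def
    using P0[OF HP] B0 Padd[OF HP] Badd Pmul[OF HP] Bmul by auto
  moreover have "P \<inter> B \<noteq> B" using P1[OF HP] B1 by blast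
  moreover have "\<forall>a\<in>B. \<forall>b\<in>B. a * b \<in> P \<inter> B \<longrightarrow> a \<in> P \<inter> B \<or> b \<in> P \<inter> B"
    using Pprime[OF HP] by blast
  moreover have "\<forall>s\<in>B. \<forall>p\<in>P \<inter> B. br s p \<in> P \<inter> B" using Pbr[OF HP] Bbr by blast
  moreover have "H_stable r act (P \<inter> B)" unfolding H_stable_def using Pact[OF HP] Bact by blast
  ultimately show ?thesis unfolding H_poisson_primes_def poisson_prime_in_def prime_ideal_in_def
    by blast
qed

lemma main:
  "\<exists>f. inj_on f (H_poisson_primes r act br UNIV)
     \<and> f ` H_poisson_primes r act br UNIV \<subseteq> H_poisson_primes r act br B \<times> (UNIV :: bool set)"
proof (intro exI conjI)
  let ?f = "\<lambda>P. (P \<inter> B, flag P)"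
  show "inj_on ?f (H_poisson_primes r act br UNIV)"
  proof (rule inj_onI)
    fix P Q assume "P \<in> H_poisson_primes r act br UNIV" "Q \<in> H_poisson_primes r act br UNIV"
      and fe: "?f P = ?f Q"
    hence HP: "HPP P" and HQ: "HPP Q" unfolding HPP_def by auto
    have eq: "P \<inter> B = Q \<inter> B" and fl: "flag P = flag Q" using fe by auto
    show "P = Q"
    proof (cases "flag P")
      case True
      thus ?thesis using R2[OF HP HQ eq] R2[OF HQ HP eq[symmetric]] fl by blast
    next
      case False
      thus ?thesis using unflag_sub[OF HP HQ eq] unflag_sub[OF HQ HP eq[symmetric]] fl by blast
    qed
  qed
  show "?f ` H_poisson_primes r act br UNIV \<subseteq> H_poisson_primes r act br B \<times> (UNIV :: bool set)"
    using contract unfolding HPP_def by auto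
qed

end

theorem proposition1p9:
  fixes scale :: "'k::field_char_0 \<Rightarrow> 'a::comm_ring_1 \<Rightarrow> 'a"
    and br :: "'a \<Rightarrow> 'a \<Rightarrow> 'a"
    and B :: "'a set" and x :: 'a
    and r :: nat and act :: "(nat \<Rightarrow> 'k) \<Rightarrow> 'a \<Rightarrow> 'a"
    and m0 :: "nat \<Rightarrow> int" and eta0 :: "nat \<Rightarrow> 'k"
  assumes "poisson_algebra scale br"
    and "poisson_subalgebra scale br B"
    and "generated_subalgebra scale (insert x B) = UNIV"
    and "rational_poisson_action scale br r act"
    and "H_stable r act B"
    and "x \<noteq> 0" and "m0 \<in> char_lattice r" and "x \<in> eigenspace scale r act m0"
    and "\<forall>b\<in>B. br x b - lie_act scale r act eta0 b * x \<in> B"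
    and "pairing r eta0 m0 \<noteq> 0"
  shows "\<exists>f. inj_on f (H_poisson_primes r act br UNIV)
           \<and> f ` H_poisson_primes r act br UNIV \<subseteq> H_poisson_primes r act br B \<times> (UNIV :: bool set)"
proof -
  interpret pset scale br B x r act m0 eta0
    by (unfold_locales) (use assms in auto)
  show ?thesis by (rule main)
qed

end
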